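(* Let $\gamma,\delta$ be positive integers, let $\varphi_{\gamma,\delta}(z)=(1+z)^{\gamma}(1+z^{-1})^{\delta}$, let $\mu$ be a partition of length $M=l(\mu)$, and let $N\ge M$. Then $$D_N^{\varnothing,\mu}(\varphi_{\gamma,\delta})=D_N(\varphi_{\gamma,\delta})\,\frac{G(N-M+1)}{G(N+1)}\,\frac{G(\delta+N+1)}{G(\delta+N-M+1)}\,s_{\mu'}(1^{\gamma})\prod_{k=1}^{M}\frac{(\mu_k+N-k)!}{(\delta+\mu_k+N-k)!}.$$
   Context: For a Laurent polynomial $f(z)=\sum_kd_kz^k$, $D_N(f)=\det(d_{j-k})_{j,k=1}^N$ and $D_N^{\varnothing,\mu}(f)=\det(d_{j-k+\mu_k})_{j,k=1}^N$, with $\mu_k=0$ for $k>l(\mu)$. Here $d_k=\binom{\gamma+\delta}{\delta+k}$ for $-\delta\le k\le\gamma$ and $0$ otherwise. $\mu'$ is the conjugate partition, and $s_{\mu'}(1^\gamma)$ is the Schur polynomial evaluated at $\gamma$ variables equal to $1$. $G$ is the Barnes $G$-function ($G(1)=1$, $G(z+1)=\Gamma(z)G(z)$). *)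

theory Defs
  imports Complex_Main "Jordan_Normal_Form.Determinant"
begin

text \<open>Laurent coefficients of phi_{gamma,delta}(z) = (1+z)^gamma (1+1/z)^delta:
  d_k = binom(gamma+delta, delta+k) for -delta <= k <= gamma, 0 otherwise.\<close>
definition phi_coeff :: "nat \<Rightarrow> nat \<Rightarrow> int \<Rightarrow> real" where
  "phi_coeff \<gamma> \<delta> k =
     (if - int \<delta> \<le> k \<and> k \<le> int \<gamma> then real ((\<gamma> + \<delta>) choose nat (int \<delta> + k)) else 0)"

definition is_partition :: "nat list \<Rightarrow> bool" where
  "is_partition \<mu> \<longleftrightarrow> sorted (rev \<mu>) \<and> (\<forall>x\<in>set \<mu>. 0 < x)"

definition part_nth :: "nat list \<Rightarrow> nat \<Rightarrow> nat" where
  "part_nth \<mu> k = (if 1 \<le> k \<and> k \<le> length \<mu> then \<mu> ! (k - 1) else 0)"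

text \<open>Toeplitz determinant D_N(f) = det(d_{j-k})_{j,k=1}^N (indices shifted to 0..N-1).\<close>
definition toeplitz_det :: "(int \<Rightarrow> real) \<Rightarrow> nat \<Rightarrow> real" where
  "toeplitz_det d N = det (mat N N (\<lambda>(j,k). d (int j - int k)))"

text \<open>D_N^{empty,mu}(f) = det(d_{j-k+mu_k})_{j,k=1}^N.\<close>
definition toeplitz_det_mu :: "(int \<Rightarrow> real) \<Rightarrow> nat list \<Rightarrow> nat \<Rightarrow> real" where
  "toeplitz_det_mu d \<mu> N =
     det (mat N N (\<lambda>(j,k). d ((int (j+1)) - int (k+1) + int (part_nth \<mu> (k+1)))))"

definition conj_part :: "nat list \<Rightarrow> nat list" where
  "conj_part \<mu> = map (\<lambda>j. card {i. i < length \<mu> \<and> j < \<mu> ! i})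
                      [0..<(if \<mu> = [] then 0 else hd \<mu>)]"

text \<open>Young diagram cells (0-based (row, column)).\<close>
definition cells :: "nat list \<Rightarrow> (nat \<times> nat) set" where
  "cells la = {(i,j). i < length la \<and> j < la ! i}"

definition SSYT :: "nat list \<Rightarrow> nat \<Rightarrow> ((nat \<times> nat) \<Rightarrow> nat) set" where
  "SSYT la n = {T. (\<forall>c\<in>cells la. T c \<in> {1..n}) \<and> (\<forall>c. c \<notin> cells la \<longrightarrow> T c = 0)
      \<and> (\<forall>i j. (i, Suc j) \<in> cells la \<longrightarrow> T (i, j) \<le> T (i, Suc j))
      \<and> (\<forall>i j. (Suc i, j) \<in> cells la \<longrightarrow> T (i, j) < T (Suc i, j))}"

definition schur_eval :: "nat list \<Rightarrow> nat \<Rightarrow> (nat \<Rightarrow> real) \<Rightarrow> real" where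
  "schur_eval la n x = (\<Sum>T\<in>SSYT la n. \<Prod>c\<in>cells la. x (T c))"

fun barnesG :: "nat \<Rightarrow> real" where
  "barnesG 0 = 0"
| "barnesG (Suc 0) = 1"
| "barnesG (Suc (Suc n)) = fact n * barnesG (Suc n)"

end

theory Submission
  imports Defs
begin


lemma det_fun: "det (mat N N (\<lambda>(j,k). f j k)) =
  (\<Sum>p | p permutes {..<N}. of_int (sign p) * (\<Prod>i<N. f i (p i)))"
  by (subst det_def'[where n=N]) (auto simp: atLeast0LessThan intro!: sum.cong prod.cong)

lemma det_scale_cols:
  fixes f :: "nat \<Rightarrow> nat \<Rightarrow> 'a::comm_ring_1"
  shows "det (mat N N (\<lambda>(j,k). f j k * c k)) = (\<Prod>k<N. c k) * det (mat N N (\<lambda>(j,k). f j k))"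
proof -
  have "\<And>p. p permutes {..<N} \<Longrightarrow> (\<Prod>i<N. f i (p i) * c (p i)) = (\<Prod>k<N. c k) * (\<Prod>i<N. f i (p i))"
  proof -
    fix p assume p: "p permutes {..<N}"
    have "(\<Prod>i<N. c (p i)) = (\<Prod>k<N. c k)"
      using prod.permute[OF p, of c] by (simp add: comp_def)
    then show "(\<Prod>i<N. f i (p i) * c (p i)) = (\<Prod>k<N. c k) * (\<Prod>i<N. f i (p i))"
      by (simp add: prod.distrib mult.commute)
  qed
  then show ?thesis unfolding det_fun sum_distrib_left
    by (intro sum.cong) (auto simp: mult.left_commute)
qed

lemma det_zero_col:
  fixes f :: "nat \<Rightarrow> nat \<Rightarrow> 'a::comm_ring_1"
  assumes "k < N" "\<And>j. j < N \<Longrightarrow> f j k = 0"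
  shows "det (mat N N (\<lambda>(j,k). f j k)) = 0"
  unfolding det_fun
proof (rule sum.neutral, clarify)
  fix p assume p: "p permutes {..<N}"
  then obtain i where "i < N" "p i = k" using assms(1)
    by (metis lessThan_iff permutes_def)
  then show "of_int (sign p) * (\<Prod>i<N. f i (p i)) = 0"
    using assms(2) by (metis finite_lessThan lessThan_iff mult_zero_right prod_zero)
qed

lemma det_equal_cols:
  fixes f :: "nat \<Rightarrow> nat \<Rightarrow> 'a::comm_ring_1"
  assumes "k < N" "l < N" "k \<noteq> l" "\<And>j. j < N \<Longrightarrow> f j k = f j l"
  shows "det (mat N N (\<lambda>(j,k). f j k)) = 0"
  by (rule det_identical_columns[of _ N k l]) (use assms in \<open>auto intro!: eq_vecI\<close>)

lemma det_transpose_fun: "det (mat N N (\<lambda>(j,k). f j k)) = det (mat N N (\<lambda>(j,k). f k j))"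
proof -
  have "det (mat N N (\<lambda>(j,k). f j k)) = det (transpose_mat (mat N N (\<lambda>(j,k). f j k)))"
    by (rule det_transpose[symmetric]) auto
  also have "transpose_mat (mat N N (\<lambda>(j,k). f j k)) = mat N N (\<lambda>(j,k). f k j)"
    by (rule eq_matI) auto
  finally show ?thesis .
qed

lemma det_multilinear_rows:
  fixes f g :: "nat \<Rightarrow> nat \<Rightarrow> 'a::comm_ring_1"
  shows "det (mat N N (\<lambda>(j,k). f j k + g j k)) =
    (\<Sum>S\<in>Pow {..<N}. det (mat N N (\<lambda>(j,k). if j \<in> S then g j k else f j k)))"
proof -
  have "det (mat N N (\<lambda>(j,k). f j k + g j k)) =
    (\<Sum>p | p permutes {..<N}. of_int (sign p) * (\<Sum>S\<in>Pow {..<N}. \<Prod>i<N. (if i \<in> S then g i (p i) else f i (p i))))"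
    unfolding det_fun
  proof (rule sum.cong[OF refl])
    fix p
    have "(\<Prod>i<N. f i (p i) + g i (p i)) = (\<Prod>i<N. g i (p i) + f i (p i))" by (simp add: add.commute)
    also have "\<dots> = (\<Sum>S\<in>Pow {..<N}. (\<Prod>i\<in>S. g i (p i)) * (\<Prod>i\<in>{..<N} - S. f i (p i)))"
      by (rule prod_add) simp
    also have "\<dots> = (\<Sum>S\<in>Pow {..<N}. \<Prod>i<N. (if i \<in> S then g i (p i) else f i (p i)))"
    proof (rule sum.cong[OF refl])
      fix S assume "S \<in> Pow {..<N}"
      then have S: "S \<subseteq> {..<N}" by auto
      have "(\<Prod>i<N. (if i \<in> S then g i (p i) else f i (p i))) =
        (\<Prod>i\<in>{..<N} \<inter> {i. i \<in> S}. g i (p i)) * (\<Prod>i\<in>{..<N} \<inter> - {i. i \<in> S}. f i (p i))"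
        by (rule prod.If_cases) simp
      also have "{..<N} \<inter> {i. i \<in> S} = S" using S by auto
      also have "{..<N} \<inter> - {i. i \<in> S} = {..<N} - S" by auto
      finally show "(\<Prod>i\<in>S. g i (p i)) * (\<Prod>i\<in>{..<N} - S. f i (p i)) = (\<Prod>i<N. (if i \<in> S then g i (p i) else f i (p i)))" by simp
    qed
    finally show "of_int (sign p) * (\<Prod>i<N. f i (p i) + g i (p i)) =
      of_int (sign p) * (\<Sum>S\<in>Pow {..<N}. \<Prod>i<N. (if i \<in> S then g i (p i) else f i (p i)))" by simp
  qed
  also have "\<dots> = (\<Sum>S\<in>Pow {..<N}. \<Sum>p | p permutes {..<N}. of_int (sign p) * (\<Prod>i<N. (if i \<in> S then g i (p i) else f i (p i))))"
    by (simp add: sum_distrib_left sum.swap[where A="{p. p permutes {..<N}}"])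
  also have "\<dots> = (\<Sum>S\<in>Pow {..<N}. det (mat N N (\<lambda>(j,k). if j \<in> S then g j k else f j k)))"
    unfolding det_fun by (rule sum.cong) (auto intro!: sum.cong prod.cong)
  finally show ?thesis .
qed

lemma det_multilinear_cols:
  fixes f g :: "nat \<Rightarrow> nat \<Rightarrow> 'a::comm_ring_1"
  shows "det (mat N N (\<lambda>(j,k). f j k + g j k)) =
    (\<Sum>S\<in>Pow {..<N}. det (mat N N (\<lambda>(j,k). if k \<in> S then g j k else f j k)))"
  apply (subst det_transpose_fun)
  apply (subst det_multilinear_rows)
  apply (subst det_transpose_fun)
  apply simp
  done



definition gbin :: "nat \<Rightarrow> int \<Rightarrow> real" where
  "gbin n t = (if 0 \<le> t \<and> t \<le> int n then real (n choose nat t) else 0)"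

lemma fact_split: "(fact (t + m) :: real) = fact t * (\<Prod>d<m. real (t + 1 + d))"
  by (induction m) (auto simp: algebra_simps)

lemma prod_shift_ivl: fixes j N :: nat shows "(\<Prod>i\<in>{j+1..<N}. f i) = (\<Prod>d<N-1-j. f (j + 1 + d))"
proof -
  have "{j+1..<N} = (\<lambda>d. j + 1 + d) ` {..<N-1-j}"
  proof -
    have "x \<in> (\<lambda>d. j + 1 + d) ` {..<N-1-j}" if "j+1 \<le> x" "x < N" for x
    proof -
      have "x = j+1+(x-(j+1))" "x-(j+1) \<in> {..<N-1-j}" using that by auto
      then show ?thesis by blast
    qed
    then show ?thesis by auto
  qed
  moreover have "inj_on (\<lambda>d. j + 1 + d) {..<N-1-j}" by (auto simp: inj_on_def)
  ultimately show ?thesis using prod.reindex[of "\<lambda>d. j + 1 + d" "{..<N-1-j}" f] by (simp add: comp_def)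
qed

lemma key_id:
  fixes y :: int
  assumes "0 \<le> y + int N - 1" "y \<le> int n" "j < N"
  shows "gbin n (y + int j) * fact (nat (y + int N - 1)) * fact (nat (int n - y)) =
    fact n * (\<Prod>i\<in>{j+1..<N}. real_of_int (y + int i)) * (\<Prod>i<j. real_of_int (int n - y - int i))"
proof (cases "y + int j < 0")
  case True
  have "(\<Prod>i\<in>{j+1..<N}. real_of_int (y + int i)) = 0"
    by (rule prod_zero) (use True assms in \<open>auto intro!: bexI[where x="nat (-y)"]\<close>)
  then show ?thesis using True by (simp add: gbin_def)
next
  case F1: False
  show ?thesis
  proof (cases "y + int j > int n")
    case True
    have "(\<Prod>i<j. real_of_int (int n - y - int i)) = 0"
      by (rule prod_zero) (use True assms in \<open>auto intro!: bexI[where x="nat (int n - y)"]\<close>)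
    then show ?thesis using True by (simp add: gbin_def)
  next
    case False
    define t where "t = nat (y + int j)"
    have t: "int t = y + int j" "t \<le> n" using F1 False by (auto simp: t_def)
    have "0 \<le> y + int j" "y + int j \<le> int n" using F1 False by auto
    then have g: "gbin n (y + int j) = real (n choose t)" unfolding gbin_def t_def by simp
    have a: "nat (y + int N - 1) = t + (N - 1 - j)" using t assms by linarith
    have b: "nat (int n - y) = (n - t) + j" using t assms by linarith
    have P1: "(\<Prod>i\<in>{j+1..<N}. real_of_int (y + int i)) = (\<Prod>d<N-1-j. real (t + 1 + d))"
      unfolding prod_shift_ivl by (rule prod.cong) (use t in auto)
    have "(\<Prod>i<j. real_of_int (int n - y - int i)) = (\<Prod>i<j. real_of_int (int n - y - int (j - Suc i)))"
      by (rule prod.nat_diff_reindex[symmetric])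
    also have "\<dots> = (\<Prod>d<j. real (n - t + 1 + d))"
      by (rule prod.cong) (use t in auto)
    finally have P2: "(\<Prod>i<j. real_of_int (int n - y - int i)) = (\<Prod>d<j. real (n - t + 1 + d))" .
    have bf: "fact t * fact (n - t) * real (n choose t) = fact n"
      using binomial_fact_lemma[OF t(2)] by (metis of_nat_fact of_nat_mult)
    show ?thesis unfolding g a b P1 P2 fact_split
      using bf by (simp add: algebra_simps)
  qed
qed

lemma gbin_pascal: "gbin (Suc n) t = gbin n t + gbin n (t - 1)"
proof -
  consider "t < 0" | "t = 0" | "0 < t" "t \<le> int n" | "t = int n + 1" | "t > int n + 1" by linarith
  then show ?thesis
  proof cases
    case 3
    then have "nat t = Suc (nat (t - 1))" by linarith
    then show ?thesis using 3 by (simp add: gbin_def)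
  next
    case 4
    then have "nat t = Suc n" "nat (t - 1) = n" by auto
    then show ?thesis using 4 by (simp add: gbin_def)
  qed (auto simp: gbin_def)
qed



definition Fpoly :: "nat \<Rightarrow> nat \<Rightarrow> int \<Rightarrow> nat \<Rightarrow> real poly" where
  "Fpoly n N s j = (\<Prod>i\<in>{j+1..<N}. [:of_int (int i - s), 1:]) * (\<Prod>i<j. [:of_int (int n + s - int i), -1:])"

lemma poly_Fpoly: "poly (Fpoly n N s j) x =
  (\<Prod>i\<in>{j+1..<N}. x - of_int s + of_nat i) * (\<Prod>i<j. of_nat n + of_int s - of_nat i - x)"
  by (simp add: Fpoly_def poly_prod algebra_simps)

lemma degree_Fpoly: assumes "j < N" shows "degree (Fpoly n N s j) < N"
proof -
  have d1: "degree (\<Prod>i\<in>{j+1..<N}. [:of_int (int i - s), 1::real:]) \<le> N - 1 - j"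
    by (rule order.trans[OF degree_prod_sum_le]) (auto intro!: order.trans[OF sum_mono[where g="\<lambda>_. 1"]])
  have d2: "degree (\<Prod>i<j. [:of_int (int n + s - int i), -1::real:]) \<le> j"
    by (rule order.trans[OF degree_prod_sum_le]) (auto intro!: order.trans[OF sum_mono[where g="\<lambda>_. 1"]])
  have "degree (Fpoly n N s j) \<le> degree (\<Prod>i\<in>{j+1..<N}. [:of_int (int i - s), 1::real:]) + degree (\<Prod>i<j. [:of_int (int n + s - int i), -1::real:])"
    unfolding Fpoly_def by (rule degree_mult_le)
  then show ?thesis using d1 d2 assms by linarith
qed

lemma poly_as_sum: fixes p :: "real poly" assumes "degree p < N" shows "poly p x = (\<Sum>m<N. coeff p m * x ^ m)"
  unfolding poly_altdef
  by (rule sum.mono_neutral_left) (use assms in \<open>auto simp: coeff_eq_0\<close>)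

definition wfc :: "nat \<Rightarrow> nat \<Rightarrow> int \<Rightarrow> real" where
  "wfc n N y = fact n / (fact (nat (y + int N - 1)) * fact (nat (int n - y)))"

definition Vdet :: "nat \<Rightarrow> (nat \<Rightarrow> int) \<Rightarrow> real" where
  "Vdet N x = det (mat N N (\<lambda>(m,k). (real_of_int (x k)) ^ m))"

lemma eval_det:
  fixes n N :: nat and s :: int
  shows "\<exists>K. \<forall>x::nat\<Rightarrow>int. (\<forall>k<N. 0 \<le> x k - s + int N - 1 \<and> x k - s \<le> int n) \<longrightarrow>
    det (mat N N (\<lambda>(j,k). gbin n (x k - s + int j))) = K * Vdet N x * (\<Prod>k<N. wfc n N (x k - s))"
proof (intro exI allI impI)
  fix x :: "nat \<Rightarrow> int"
  assume cond: "\<forall>k<N. 0 \<le> x k - s + int N - 1 \<and> x k - s \<le> int n"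
  define C where "C = mat N N (\<lambda>(j,m). coeff (Fpoly n N s j) m)"
  define V where "V = mat N N (\<lambda>(m,k). (real_of_int (x k)) ^ m)"
  have e: "gbin n (x k - s + int j) = poly (Fpoly n N s j) (of_int (x k)) * wfc n N (x k - s)"
    if "j < N" "k < N" for j k
  proof -
    have c: "0 \<le> (x k - s) + int N - 1" "x k - s \<le> int n" using cond that by auto
    have ki: "gbin n ((x k - s) + int j) * fact (nat ((x k - s) + int N - 1)) * fact (nat (int n - (x k - s))) =
      fact n * (\<Prod>i\<in>{j+1..<N}. real_of_int ((x k - s) + int i)) * (\<Prod>i<j. real_of_int (int n - (x k - s) - int i))"
      by (rule key_id[OF c that(1)])
    have pp: "poly (Fpoly n N s j) (of_int (x k)) = (\<Prod>i\<in>{j+1..<N}. real_of_int ((x k - s) + int i)) * (\<Prod>i<j. real_of_int (int n - (x k - s) - int i))"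
      unfolding poly_Fpoly by (simp add: algebra_simps)
    have nz: "(fact (nat ((x k - s) + int N - 1)) :: real) * fact (nat (int n - (x k - s))) \<noteq> 0" by simp
    show ?thesis unfolding pp wfc_def using ki nz
      by (simp add: field_simps)
  qed
  have "mat N N (\<lambda>(j,k). gbin n (x k - s + int j)) = mat N N (\<lambda>(j,k). (C * V) $$ (j,k) * wfc n N (x k - s))"
  proof (rule eq_matI)
    fix j k assume jk: "j < dim_row (mat N N (\<lambda>(j,k). (C * V) $$ (j,k) * wfc n N (x k - s)))"
      "k < dim_col (mat N N (\<lambda>(j,k). (C * V) $$ (j,k) * wfc n N (x k - s)))"
    then have jk': "j < N" "k < N" by auto
    have "(C * V) $$ (j,k) = (\<Sum>m<N. coeff (Fpoly n N s j) m * (real_of_int (x k)) ^ m)"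
      using jk' unfolding C_def V_def by (auto simp: scalar_prod_def atLeast0LessThan intro!: sum.cong)
    also have "\<dots> = poly (Fpoly n N s j) (of_int (x k))"
      by (rule poly_as_sum[symmetric]) (rule degree_Fpoly[OF jk'(1)])
    finally show "mat N N (\<lambda>(j,k). gbin n (x k - s + int j)) $$ (j, k) = mat N N (\<lambda>(j,k). (C * V) $$ (j,k) * wfc n N (x k - s)) $$ (j, k)"
      using jk' e by simp
  qed auto
  then have "det (mat N N (\<lambda>(j,k). gbin n (x k - s + int j))) = (\<Prod>k<N. wfc n N (x k - s)) * det (mat N N (\<lambda>(j,k). (C * V) $$ (j,k)))"
    by (simp add: det_scale_cols)
  also have "mat N N (\<lambda>(j,k). (C * V) $$ (j,k)) = C * V"
    by (rule eq_matI) (auto simp: C_def V_def)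
  also have "det (C * V) = det C * det V"
    by (rule det_mult) (auto simp: C_def V_def)
  finally show "det (mat N N (\<lambda>(j,k). gbin n (x k - s + int j))) = det C * Vdet N x * (\<Prod>k<N. wfc n N (x k - s))"
    by (simp add: V_def Vdet_def)
qed



definition CS :: "nat \<Rightarrow> (nat \<Rightarrow> nat) \<Rightarrow> (nat \<times> nat) set" where
  "CS N h = {(i,j). j < N \<and> i < h j}"

definition SSYTc :: "(nat \<times> nat) set \<Rightarrow> nat \<Rightarrow> ((nat \<times> nat) \<Rightarrow> nat) set" where
  "SSYTc C n = {T. (\<forall>c\<in>C. T c \<in> {1..n}) \<and> (\<forall>c. c \<notin> C \<longrightarrow> T c = 0)
      \<and> (\<forall>i j. (i, Suc j) \<in> C \<longrightarrow> T (i, j) \<le> T (i, Suc j))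
      \<and> (\<forall>i j. (Suc i, j) \<in> C \<longrightarrow> T (i, j) < T (Suc i, j))}"

lemma SSYT_c: "SSYT la n = SSYTc (cells la) n"
  by (simp add: SSYT_def SSYTc_def)

definition decr :: "nat \<Rightarrow> (nat \<Rightarrow> 'a::linorder) \<Rightarrow> bool" where
  "decr N h \<longleftrightarrow> (\<forall>j. Suc j < N \<longrightarrow> h (Suc j) \<le> h j)"

lemma decr_chain: assumes "decr N h" "j \<le> k" "k < N" shows "h k \<le> h j"
  using assms(2,3)
proof (induction k)
  case (Suc k)
  show ?case
  proof (cases "j = Suc k")
    case False
    then have "h k \<le> h j" using Suc by auto
    moreover have "h (Suc k) \<le> h k" using assms(1) Suc.prems unfolding decr_def by auto
    ultimately show ?thesis by order
  qed simp
qed simp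

definition SD :: "nat \<Rightarrow> nat \<Rightarrow> (nat \<Rightarrow> nat) \<Rightarrow> real" where
  "SD N n h = det (mat N N (\<lambda>(j,k). gbin n (int (h k) - int k + int j)))"

lemma finite_CS: "finite (CS N h)"
proof -
  have "CS N h \<subseteq> {..<(\<Sum>k<N. h k)} \<times> {..<N}"
  proof
    fix c assume "c \<in> CS N h"
    then obtain i j where c: "c = (i,j)" "j < N" "i < h j" by (auto simp: CS_def)
    have "h j \<le> (\<Sum>k<N. h k)" using c by (intro member_le_sum) auto
    then show "c \<in> {..<(\<Sum>k<N. h k)} \<times> {..<N}" using c by auto
  qed
  then show ?thesis by (rule finite_subset) auto
qed

lemma finite_SSYTc: assumes "finite C" shows "finite (SSYTc C n)"
proof -
  have "SSYTc C n \<subseteq> {f. \<forall>x. (x \<in> C \<longrightarrow> f x \<in> {1..n}) \<and> (x \<notin> C \<longrightarrow> f x = 0)}"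
    by (auto simp: SSYTc_def)
  then show ?thesis by (rule finite_subset) (intro finite_set_of_finite_funs assms, simp)
qed

lemma SSYTc_bound: "T \<in> SSYTc C n \<Longrightarrow> T c \<le> n"
  unfolding SSYTc_def by (cases c; cases "c \<in> C") auto

lemma SSYTc_out: "T \<in> SSYTc C n \<Longrightarrow> c \<notin> C \<Longrightarrow> T c = 0"
  unfolding SSYTc_def by (cases c) auto

lemma SSYTc_col_chain:
  assumes T: "T \<in> SSYTc (CS N h) n" and k: "k < N" and ii: "i < i'" "i' < h k"
  shows "T (i,k) < T (i',k)"
  using ii
proof (induction i')
  case (Suc i')
  have "T (i', k) < T (Suc i', k)" using T Suc.prems k by (auto simp: SSYTc_def CS_def)
  then show ?case using Suc by (cases "i = i'") auto
qed simp

definition gS :: "(nat \<Rightarrow> nat) \<Rightarrow> nat set \<Rightarrow> nat \<Rightarrow> nat" where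
  "gS h S k = h k - (if k \<in> S then 1 else 0)"

definition Good :: "nat \<Rightarrow> (nat \<Rightarrow> nat) \<Rightarrow> nat set set" where
  "Good N h = {S. S \<subseteq> {..<N} \<and> (\<forall>k\<in>S. 0 < h k) \<and> decr N (gS h S)}"

definition topS :: "nat \<Rightarrow> (nat \<Rightarrow> nat) \<Rightarrow> nat \<Rightarrow> ((nat \<times> nat) \<Rightarrow> nat) \<Rightarrow> nat set" where
  "topS N h n T = {k. k < N \<and> 0 < h k \<and> T (h k - 1, k) = Suc n}"

lemma finite_Good: "finite (Good N h)"
  by (rule finite_subset[of _ "Pow {..<N}"]) (auto simp: Good_def)

lemma topS_Good:
  assumes T: "T \<in> SSYTc (CS N h) (Suc n)" and d: "decr N h"
  shows "topS N h n T \<in> Good N h"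
proof -
  let ?S = "topS N h n T"
  have "decr N (gS h ?S)"
    unfolding decr_def
  proof (intro allI impI)
    fix j assume j: "Suc j < N"
    have hj: "h (Suc j) \<le> h j" using d j by (auto simp: decr_def)
    show "gS h ?S (Suc j) \<le> gS h ?S j"
    proof (cases "h (Suc j) < h j \<or> j \<notin> ?S")
      case True then show ?thesis using hj by (auto simp: gS_def)
    next
      case False
      then have eq: "h (Suc j) = h j" and jS: "j \<in> ?S" using hj by auto
      then have pos: "0 < h j" and Tj: "T (h j - 1, j) = Suc n" by (auto simp: topS_def)
      have cell: "(h j - 1, Suc j) \<in> CS N h" using j eq pos by (auto simp: CS_def)
      then have "T (h j - 1, j) \<le> T (h j - 1, Suc j)" using T by (auto simp: SSYTc_def)
      moreover have "T (h j - 1, Suc j) \<le> Suc n" by (rule SSYTc_bound[OF T])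
      ultimately have "T (h (Suc j) - 1, Suc j) = Suc n" using Tj eq by auto
      then have "Suc j \<in> ?S" using j eq pos by (auto simp: topS_def)
      then show ?thesis using jS eq by (auto simp: gS_def)
    qed
  qed
  then show ?thesis by (auto simp: Good_def topS_def)
qed

lemma CS_gS_sub: "CS N (gS h S) \<subseteq> CS N h"
  by (auto simp: CS_def gS_def)

lemma CS_diff: "c \<in> CS N h - CS N (gS h S) \<longleftrightarrow> (\<exists>k\<in>S. k < N \<and> 0 < h k \<and> c = (h k - 1, k))"
  by (cases c) (auto simp: CS_def gS_def split: if_splits)

lemma fiber_bound:
  assumes T: "T \<in> SSYTc (CS N h) (Suc n)" and S: "topS N h n T = S" and c: "c \<in> CS N (gS h S)"
  shows "T c \<le> n"
proof -
  obtain i k where c': "c = (i,k)" "k < N" "i < gS h S k" using c by (auto simp: CS_def)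
  have ih: "i < h k" using c' by (auto simp: gS_def split: if_splits)
  show ?thesis
  proof (cases "i < h k - 1")
    case True
    then have "T (i,k) < T (h k - 1, k)" using SSYTc_col_chain[OF T c'(2) True] ih by auto
    moreover have "T (h k - 1, k) \<le> Suc n" by (rule SSYTc_bound[OF T])
    ultimately show ?thesis using c' by auto
  next
    case False
    then have i: "i = h k - 1" using ih by auto
    then have "k \<notin> S" using c' by (auto simp: gS_def)
    then have "T (h k - 1, k) \<noteq> Suc n" using S c' ih by (auto simp: topS_def)
    moreover have "T (h k - 1, k) \<le> Suc n" by (rule SSYTc_bound[OF T])
    ultimately show ?thesis using c' i by auto
  qed
qed

definition rmv :: "nat \<Rightarrow> ((nat \<times> nat) \<Rightarrow> nat) \<Rightarrow> (nat \<times> nat) \<Rightarrow> nat" where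
  "rmv n T = (\<lambda>c. if T c = Suc n then 0 else T c)"

definition ext :: "nat \<Rightarrow> (nat \<Rightarrow> nat) \<Rightarrow> nat set \<Rightarrow> nat \<Rightarrow> ((nat \<times> nat) \<Rightarrow> nat) \<Rightarrow> (nat \<times> nat) \<Rightarrow> nat" where
  "ext N h S n T' = (\<lambda>c. if c \<in> CS N h - CS N (gS h S) then Suc n else T' c)"

definition Fib :: "nat \<Rightarrow> (nat \<Rightarrow> nat) \<Rightarrow> nat \<Rightarrow> nat set \<Rightarrow> ((nat \<times> nat) \<Rightarrow> nat) set" where
  "Fib N h n S = {T \<in> SSYTc (CS N h) (Suc n). topS N h n T = S}"

lemma rmv_in:
  assumes T: "T \<in> Fib N h n S"
  shows "rmv n T \<in> SSYTc (CS N (gS h S)) n"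
proof -
  have T1: "T \<in> SSYTc (CS N h) (Suc n)" and S: "topS N h n T = S" using T by (auto simp: Fib_def)
  have fb: "T c \<le> n" if "c \<in> CS N (gS h S)" for c using fiber_bound[OF T1 S that] .
  have sub: "c \<in> CS N h" if "c \<in> CS N (gS h S)" for c using CS_gS_sub that by auto
  have r1: "rmv n T c = T c" if "c \<in> CS N (gS h S)" for c using fb[OF that] by (auto simp: rmv_def)
  have rle: "rmv n T c \<le> T c" for c by (auto simp: rmv_def)
  show ?thesis unfolding SSYTc_def
  proof (intro CollectI conjI allI impI ballI)
    fix c assume c: "c \<in> CS N (gS h S)"
    then show "rmv n T c \<in> {1..n}" using r1[OF c] fb[OF c] sub[OF c] T1 by (auto simp: SSYTc_def)
  next
    fix c assume c: "c \<notin> CS N (gS h S)"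
    show "rmv n T c = 0"
    proof (cases "c \<in> CS N h")
      case True
      then obtain k where k: "k \<in> S" "k < N" "0 < h k" "c = (h k - 1, k)" using c CS_diff[of c N h S] by auto
      then have "T c = Suc n" using S by (auto simp: topS_def)
      then show ?thesis by (simp add: rmv_def)
    next
      case False then show ?thesis using SSYTc_out[OF T1 False] by (auto simp: rmv_def)
    qed
  next
    fix i j assume c: "(i, Suc j) \<in> CS N (gS h S)"
    have "T (i,j) \<le> T (i, Suc j)" using T1 sub[OF c] by (auto simp: SSYTc_def)
    then show "rmv n T (i, j) \<le> rmv n T (i, Suc j)" using r1[OF c] rle[of "(i,j)"] by linarith
  next
    fix i j assume c: "(Suc i, j) \<in> CS N (gS h S)"
    have "T (i,j) < T (Suc i, j)" using T1 sub[OF c] by (auto simp: SSYTc_def)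
    then show "rmv n T (i, j) < rmv n T (Suc i, j)" using r1[OF c] rle[of "(i,j)"] by linarith
  qed
qed

lemma ext_in:
  assumes S: "S \<in> Good N h" and T': "T' \<in> SSYTc (CS N (gS h S)) n"
  shows "ext N h S n T' \<in> Fib N h n S"
proof -
  let ?g = "gS h S"
  let ?E = "ext N h S n T'"
  have dg: "decr N ?g" and SN: "S \<subseteq> {..<N}" and Spos: "\<forall>k\<in>S. 0 < h k" using S by (auto simp: Good_def)
  have Tb: "T' c \<le> n" for c by (rule SSYTc_bound[OF T'])
  have Eb: "?E c \<le> Suc n" for c using Tb[of c] by (auto simp: ext_def)
  have E_in: "?E c = T' c" if "c \<in> CS N ?g" for c using that by (auto simp: ext_def)
  have T'0: "T' c = 0" if "c \<notin> CS N ?g" for c using SSYTc_out[OF T' that] .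
  have inS: "?E \<in> SSYTc (CS N h) (Suc n)" unfolding SSYTc_def
  proof (intro CollectI conjI allI impI ballI)
    fix c assume c: "c \<in> CS N h"
    show "?E c \<in> {1..Suc n}"
    proof (cases "c \<in> CS N ?g")
      case True then show ?thesis using T' Tb[of c] E_in by (auto simp: SSYTc_def)
    qed (use c in \<open>auto simp: ext_def\<close>)
  next
    fix c assume c: "c \<notin> CS N h"
    then have "c \<notin> CS N ?g" using CS_gS_sub by auto
    then show "?E c = 0" using c T'0 by (auto simp: ext_def)
  next
    fix i j assume c: "(i, Suc j) \<in> CS N h"
    show "?E (i, j) \<le> ?E (i, Suc j)"
    proof (cases "(i, Suc j) \<in> CS N ?g")
      case False
      then have "?E (i, Suc j) = Suc n" using c by (auto simp: ext_def)
      then show ?thesis using Eb by simp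
    next
      case True
      have "(i, j) \<in> CS N ?g"
      proof -
        have "i < ?g (Suc j)" "Suc j < N" using True by (auto simp: CS_def)
        moreover have "?g (Suc j) \<le> ?g j" using dg \<open>Suc j < N\<close> by (auto simp: decr_def)
        ultimately show ?thesis by (auto simp: CS_def)
      qed
      then show ?thesis using True T' E_in by (auto simp: SSYTc_def)
    qed
  next
    fix i j assume c: "(Suc i, j) \<in> CS N h"
    have ij: "(i, j) \<in> CS N h" using c by (auto simp: CS_def)
    show "?E (i, j) < ?E (Suc i, j)"
    proof (cases "(Suc i, j) \<in> CS N ?g")
      case False
      then have "?E (Suc i, j) = Suc n" using c by (auto simp: ext_def)
      moreover have "(i, j) \<in> CS N ?g"
      proof -
        obtain k where k: "k \<in> S" "k < N" "0 < h k" "(Suc i, j) = (h k - 1, k)"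
          using False c CS_diff[of "(Suc i, j)" N h S] by auto
        then show ?thesis by (auto simp: CS_def gS_def)
      qed
      ultimately show ?thesis using E_in Tb by (metis le_imp_less_Suc)
    next
      case True
      have "(i, j) \<in> CS N ?g" using True by (auto simp: CS_def)
      then show ?thesis using True T' E_in by (auto simp: SSYTc_def)
    qed
  qed
  have A: "k \<in> S" if k: "k \<in> topS N h n ?E" for k
  proof -
    have kk: "k < N" "0 < h k" "?E (h k - 1, k) = Suc n" using k by (auto simp: topS_def)
    show "k \<in> S"
    proof (rule ccontr)
      assume "k \<notin> S"
      then have "(h k - 1, k) \<in> CS N ?g" using kk by (auto simp: CS_def gS_def)
      then have "?E (h k - 1, k) = T' (h k - 1, k)" by (rule E_in)
      then show False using kk Tb[of "(h k - 1, k)"] by simp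
    qed
  qed
  have B: "k \<in> topS N h n ?E" if k: "k \<in> S" for k
  proof -
    have kk: "k < N" "0 < h k" using SN Spos k by auto
    moreover have "(h k - 1, k) \<in> CS N h - CS N ?g" using CS_diff[of "(h k - 1, k)" N h S] k kk by auto
    ultimately show "k \<in> topS N h n ?E" by (auto simp: topS_def ext_def)
  qed
  have "topS N h n ?E = S" using A B by blast
  then show ?thesis using inS by (auto simp: Fib_def)
qed

lemma fib_bij:
  assumes S: "S \<in> Good N h"
  shows "bij_betw (rmv n) (Fib N h n S) (SSYTc (CS N (gS h S)) n)"
proof (rule bij_betw_byWitness[where f'="ext N h S n"])
  show "\<forall>T\<in>Fib N h n S. ext N h S n (rmv n T) = T"
  proof
    fix T assume T: "T \<in> Fib N h n S"
    have T1: "T \<in> SSYTc (CS N h) (Suc n)" and St: "topS N h n T = S" using T by (auto simp: Fib_def)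
    show "ext N h S n (rmv n T) = T"
    proof
      fix c
      show "ext N h S n (rmv n T) c = T c"
      proof (cases "c \<in> CS N h - CS N (gS h S)")
        case True
        then obtain k where k: "k \<in> S" "k < N" "0 < h k" "c = (h k - 1, k)" using CS_diff[of c N h S] by auto
        then have "T c = Suc n" using St by (auto simp: topS_def)
        then show ?thesis using True by (simp add: ext_def)
      next
        case False
        have "T c \<noteq> Suc n"
        proof (cases "c \<in> CS N (gS h S)")
          case True then show ?thesis using fiber_bound[OF T1 St True] by simp
        next
          case False': False
          then have "c \<notin> CS N h" using False by auto
          then show ?thesis using SSYTc_out[OF T1] by auto
        qed
        then show ?thesis using False by (simp add: ext_def rmv_def)
      qed
    qed
  qed
next
  show "\<forall>T'\<in>SSYTc (CS N (gS h S)) n. rmv n (ext N h S n T') = T'"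
  proof
    fix T' assume T': "T' \<in> SSYTc (CS N (gS h S)) n"
    have Tb: "T' c \<le> n" for c by (rule SSYTc_bound[OF T'])
    show "rmv n (ext N h S n T') = T'"
    proof
      fix c
      show "rmv n (ext N h S n T') c = T' c"
      proof (cases "c \<in> CS N h - CS N (gS h S)")
        case True
        then have "T' c = 0" using SSYTc_out[OF T'] by auto
        then show ?thesis using True by (simp add: ext_def rmv_def)
      next
        case False
        have "ext N h S n T' c = T' c" unfolding ext_def by (rule if_not_P[OF False])
        then show ?thesis using Tb[of c] by (simp add: rmv_def)
      qed
    qed
  qed
next
  show "rmv n ` Fib N h n S \<subseteq> SSYTc (CS N (gS h S)) n" using rmv_in by blast
next
  show "ext N h S n ` SSYTc (CS N (gS h S)) n \<subseteq> Fib N h n S" using ext_in[OF S] by blast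
qed

lemma card_step:
  assumes d: "decr N h"
  shows "card (SSYTc (CS N h) (Suc n)) = (\<Sum>S\<in>Good N h. card (SSYTc (CS N (gS h S)) n))"
proof -
  have U: "SSYTc (CS N h) (Suc n) = (\<Union>S\<in>Good N h. Fib N h n S)"
    using topS_Good[OF _ d] by (auto simp: Fib_def)
  have fin: "\<forall>S\<in>Good N h. finite (Fib N h n S)"
    using finite_SSYTc[OF finite_CS] by (auto simp: Fib_def)
  have "card (SSYTc (CS N h) (Suc n)) = (\<Sum>S\<in>Good N h. card (Fib N h n S))"
    unfolding U by (rule card_UN_disjoint[OF finite_Good fin]) (auto simp: Fib_def)
  also have "\<dots> = (\<Sum>S\<in>Good N h. card (SSYTc (CS N (gS h S)) n))"
    by (rule sum.cong[OF refl]) (rule bij_betw_same_card[OF fib_bij])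
  finally show ?thesis .
qed



definition GS :: "(nat \<Rightarrow> nat) \<Rightarrow> nat set \<Rightarrow> nat \<Rightarrow> int" where
  "GS h S k = int (h k) - (if k \<in> S then 1 else 0)"

lemma SD_step:
  assumes d: "decr N h"
  shows "SD N (Suc n) h = (\<Sum>S\<in>Good N h. SD N n (gS h S))"
proof -
  define D where "D S = det (mat N N (\<lambda>(j,k). gbin n (GS h S k - int k + int j)))" for S
  have "SD N (Suc n) h = det (mat N N (\<lambda>(j,k). gbin n (int (h k) - int k + int j) + gbin n (int (h k) - int k + int j - 1)))"
    unfolding SD_def by (simp add: gbin_pascal)
  also have "\<dots> = (\<Sum>S\<in>Pow {..<N}. det (mat N N (\<lambda>(j,k). if k \<in> S then gbin n (int (h k) - int k + int j - 1) else gbin n (int (h k) - int k + int j))))"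
    by (rule det_multilinear_cols)
  also have "\<dots> = (\<Sum>S\<in>Pow {..<N}. D S)"
    unfolding D_def by (intro sum.cong refl arg_cong[where f=det] cong_mat) (auto simp: GS_def algebra_simps)
  also have "\<dots> = (\<Sum>S\<in>Good N h. D S)"
  proof (rule sum.mono_neutral_right)
    show "Good N h \<subseteq> Pow {..<N}" by (auto simp: Good_def)
    show "\<forall>S\<in>Pow {..<N} - Good N h. D S = 0"
    proof
      fix S assume S: "S \<in> Pow {..<N} - Good N h"
      then have SN: "S \<subseteq> {..<N}" and nG: "S \<notin> Good N h" by auto
      show "D S = 0"
      proof (cases "decr N (GS h S)")
        case False
        then obtain j where j: "Suc j < N" "GS h S (Suc j) > GS h S j" by (auto simp: decr_def not_le)
        have "h (Suc j) \<le> h j" using d j(1) by (auto simp: decr_def)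
        then have "h (Suc j) = h j" "j \<in> S" "Suc j \<notin> S" using j(2) by (auto simp: GS_def split: if_splits)
        then have eq: "GS h S j - int j = GS h S (Suc j) - int (Suc j)" by (simp add: GS_def)
        show ?thesis unfolding D_def
          by (rule det_equal_cols[of j N "Suc j"]) (use j(1) eq in \<open>auto intro!: arg_cong[where f="gbin n"]\<close>)
      next
        case True
        show ?thesis
        proof (cases "\<exists>k\<in>S. h k = 0")
          case True': True
          then obtain k where k: "k \<in> S" "h k = 0" by auto
          then have kN: "k < N" using SN by auto
          then have N1: "N - 1 < N" "k \<le> N - 1" by auto
          have "GS h S (N - 1) \<le> GS h S k" by (rule decr_chain[OF True N1(2) N1(1)])
          also have "GS h S k = -1" using k by (simp add: GS_def)
          finally have neg: "GS h S (N - 1) \<le> -1" .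
          show ?thesis unfolding D_def
            by (rule det_zero_col[OF N1(1)]) (use neg in \<open>auto simp: gbin_def\<close>)
        next
          case False
          have "decr N (gS h S)"
            unfolding decr_def
          proof (intro allI impI)
            fix j assume j: "Suc j < N"
            have "GS h S (Suc j) \<le> GS h S j" using True j by (auto simp: decr_def)
            moreover have "j \<in> S \<Longrightarrow> 0 < h j" "Suc j \<in> S \<Longrightarrow> 0 < h (Suc j)" using False by auto
            ultimately show "gS h S (Suc j) \<le> gS h S j" by (auto simp: GS_def gS_def split: if_splits)
          qed
          then have "S \<in> Good N h" using SN False by (auto simp: Good_def)
          then show ?thesis using nG by simp
        qed
      qed
    qed
  qed simp
  also have "\<dots> = (\<Sum>S\<in>Good N h. SD N n (gS h S))"
  proof (rule sum.cong[OF refl])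
    fix S assume "S \<in> Good N h"
    then have pos: "\<forall>k\<in>S. 0 < h k" by (auto simp: Good_def)
    have "\<And>k. GS h S k = int (gS h S k)" using pos by (auto simp: GS_def gS_def)
    then show "D S = SD N n (gS h S)" unfolding D_def SD_def by simp
  qed
  finally show ?thesis .
qed

theorem card_SD:
  assumes "decr N h"
  shows "real (card (SSYTc (CS N h) n)) = SD N n h"
  using assms
proof (induction n arbitrary: h)
  case 0
  show ?case
  proof (cases "\<forall>k<N. h k = 0")
    case True
    then have C: "CS N h = {}" by (auto simp: CS_def)
    have "SSYTc {} 0 = {\<lambda>_. 0}"
    proof -
      have "T = (\<lambda>_. 0)" if "T \<in> SSYTc {} 0" for T using SSYTc_out[OF that] by auto
      moreover have "(\<lambda>_. 0) \<in> SSYTc {} 0" by (auto simp: SSYTc_def)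
      ultimately show ?thesis by blast
    qed
    then have c1: "card (SSYTc (CS N h) 0) = 1" using C by simp
    have "mat N N (\<lambda>(j,k). gbin 0 (int (h k) - int k + int j)) = 1\<^sub>m N"
      by (rule eq_matI) (use True in \<open>auto simp: gbin_def\<close>)
    then have "SD N 0 h = 1" by (simp add: SD_def)
    then show ?thesis using c1 by simp
  next
    case False
    then obtain k where k: "k < N" "0 < h k" by auto
    then have N0: "0 < N" by auto
    have "h k \<le> h 0" by (rule decr_chain[OF "0.prems"]) (use k in auto)
    then have h0: "0 < h 0" using k by auto
    then have cell: "(0,0) \<in> CS N h" using N0 by (auto simp: CS_def)
    have "SSYTc (CS N h) 0 = {}" using cell by (auto simp: SSYTc_def)
    moreover have "SD N 0 h = 0" unfolding SD_def
      by (rule det_zero_col[OF N0]) (use h0 in \<open>auto simp: gbin_def\<close>)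
    ultimately show ?thesis by simp
  qed
next
  case (Suc n)
  have "real (card (SSYTc (CS N h) (Suc n))) = (\<Sum>S\<in>Good N h. real (card (SSYTc (CS N (gS h S)) n)))"
    by (simp add: card_step[OF Suc.prems])
  also have "\<dots> = (\<Sum>S\<in>Good N h. SD N n (gS h S))"
    by (rule sum.cong[OF refl]) (rule Suc.IH, auto simp: Good_def)
  also have "\<dots> = SD N (Suc n) h" by (rule SD_step[OF Suc.prems, symmetric])
  finally show ?case .
qed



lemma downclosed_card:
  fixes A :: "nat set"
  assumes fin: "finite A" and dc: "\<And>a b. b \<in> A \<Longrightarrow> a \<le> b \<Longrightarrow> a \<in> A"
  shows "j < card A \<longleftrightarrow> j \<in> A"
proof
  assume j: "j < card A"
  show "j \<in> A"
  proof (rule ccontr)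
    assume "j \<notin> A"
    have "A \<subseteq> {..<j}"
    proof
      fix a assume a: "a \<in> A"
      show "a \<in> {..<j}"
      proof (rule ccontr)
        assume "a \<notin> {..<j}" then have "j \<le> a" by simp
        then have "j \<in> A" using dc a by blast
        then show False using \<open>j \<notin> A\<close> by simp
      qed
    qed
    then have "card A \<le> j" using card_mono[of "{..<j}" A] by simp
    then show False using j by simp
  qed
next
  assume "j \<in> A"
  then have "{..j} \<subseteq> A" using dc by auto
  then have "card {..j} \<le> card A" by (rule card_mono[OF fin])
  then have "Suc j \<le> card A" by simp
  then show "j < card A" by simp
qed

definition hmu :: "nat list \<Rightarrow> nat \<Rightarrow> nat" where
  "hmu \<mu> k = part_nth \<mu> (Suc k)"

lemma hmu_alt: "hmu \<mu> k = (if k < length \<mu> then \<mu> ! k else 0)"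
  by (auto simp: hmu_def part_nth_def)

lemma decr_hmu: assumes "is_partition \<mu>" shows "decr N (hmu \<mu>)"
proof -
  have "sorted (rev \<mu>)" using assms by (simp add: is_partition_def)
  then have "\<forall>i. Suc i < length \<mu> \<longrightarrow> \<mu> ! Suc i \<le> \<mu> ! i" by (simp add: sorted_rev_iff_nth_Suc)
  then show ?thesis unfolding decr_def hmu_alt by auto
qed

lemma cells_conj:
  assumes p: "is_partition \<mu>" and N: "length \<mu> \<le> N"
  shows "cells (conj_part \<mu>) = CS N (hmu \<mu>)"
proof (cases "\<mu> = []")
  case True then show ?thesis by (auto simp: cells_def conj_part_def CS_def hmu_alt)
next
  case False
  let ?L = "length \<mu>"
  have srt: "sorted (rev \<mu>)" using p by (simp add: is_partition_def)
  have mono: "\<mu> ! b \<le> \<mu> ! a" if "a \<le> b" "b < ?L" for a b using sorted_rev_nth_mono[OF srt that] .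
  have hd: "hd \<mu> = \<mu> ! 0" using False by (simp add: hd_conv_nth)
  have key: "j < card {t. t < ?L \<and> i < \<mu> ! t} \<longleftrightarrow> j < ?L \<and> i < \<mu> ! j" for i j
  proof -
    have "j < card {t. t < ?L \<and> i < \<mu> ! t} \<longleftrightarrow> j \<in> {t. t < ?L \<and> i < \<mu> ! t}"
    proof (rule downclosed_card)
      fix a b assume "b \<in> {t. t < ?L \<and> i < \<mu> ! t}" "a \<le> b"
      then show "a \<in> {t. t < ?L \<and> i < \<mu> ! t}" using mono[of a b] by auto
    qed simp
    then show ?thesis by simp
  qed
  have "(i,j) \<in> cells (conj_part \<mu>) \<longleftrightarrow> (i,j) \<in> CS N (hmu \<mu>)" for i j
  proof -
    have "(i,j) \<in> cells (conj_part \<mu>) \<longleftrightarrow> i < \<mu> ! 0 \<and> j < card {t. t < ?L \<and> i < \<mu> ! t}"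
      using False hd by (auto simp: cells_def conj_part_def)
    also have "\<dots> \<longleftrightarrow> j < ?L \<and> i < \<mu> ! j"
    proof
      assume "i < \<mu> ! 0 \<and> j < card {t. t < ?L \<and> i < \<mu> ! t}"
      then show "j < ?L \<and> i < \<mu> ! j" using key by blast
    next
      assume a: "j < ?L \<and> i < \<mu> ! j"
      then have "\<mu> ! j \<le> \<mu> ! 0" using mono[of 0 j] by simp
      then show "i < \<mu> ! 0 \<and> j < card {t. t < ?L \<and> i < \<mu> ! t}" using key a by auto
    qed
    also have "\<dots> \<longleftrightarrow> (i,j) \<in> CS N (hmu \<mu>)" using N by (auto simp: CS_def hmu_alt)
    finally show ?thesis .
  qed
  then show ?thesis by auto
qed

lemma schur_card: "schur_eval la n (\<lambda>_. 1) = real (card (SSYT la n))"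
  by (simp add: schur_eval_def)

lemma SSYTc_empty: "SSYTc {} n = {\<lambda>_. 0}"
proof -
  have "T = (\<lambda>_. 0)" if "T \<in> SSYTc {} n" for T using SSYTc_out[OF that] by auto
  moreover have "(\<lambda>_. 0) \<in> SSYTc {} n" by (auto simp: SSYTc_def)
  ultimately show ?thesis by blast
qed

lemma barnesG_prod: "barnesG (Suc (p + L)) = barnesG (Suc p) * (\<Prod>i<L. fact (p + i))"
proof (induction L)
  case (Suc L)
  have "barnesG (Suc (p + Suc L)) = fact (p + L) * barnesG (Suc (p + L))"
  proof -
    have e: "Suc (p + Suc L) = Suc (Suc (p + L))" by simp
    show ?thesis by (simp only: e barnesG.simps(3))
  qed
  then show ?case using Suc by (simp add: algebra_simps)
qed simp

lemma barnesG_pos: "barnesG (Suc p) > 0"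
proof (induction p)
  case (Suc p)
  then show ?case by simp
qed simp




lemma phi_gbin: "phi_coeff \<gamma> \<delta> t = gbin (\<gamma> + \<delta>) (int \<delta> + t)"
proof -
  have "(- int \<delta> \<le> t \<and> t \<le> int \<gamma>) \<longleftrightarrow> (0 \<le> int \<delta> + t \<and> int \<delta> + t \<le> int (\<gamma> + \<delta>))" by auto
  then show ?thesis by (simp add: phi_coeff_def gbin_def)
qed

lemma wfc_pos: "wfc n N y > 0"
  by (simp add: wfc_def)



lemma ratio_alg: fixes A B a b c d e f :: real
  assumes "a \<noteq> 0" "b \<noteq> 0" "c \<noteq> 0" "d \<noteq> 0" "e \<noteq> 0" "f \<noteq> 0"
  shows "A/(a*b) * (B/(c*d)) = A/(e*d) * (B/(f*b)) * (f/a * (e/c))"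
  using assms by (simp add: field_simps)

lemma wfc_ratio:
  fixes \<gamma> \<delta> N k hk :: nat
  assumes k: "k < N" and hk: "hk \<le> \<gamma> + k"
  shows "wfc (\<gamma>+\<delta>) N (int \<delta> + int hk - int k) * wfc \<gamma> N (int \<delta> - int k - int \<delta>) =
    wfc (\<gamma>+\<delta>) N (int \<delta> - int k) * wfc \<gamma> N (int \<delta> + int hk - int k - int \<delta>) *
    (fact (hk + N - Suc k) / fact (\<delta> + hk + N - Suc k) * (fact (\<delta> + N - Suc k) / fact (N - Suc k)))"
proof -
  have e1: "nat (int \<delta> + int hk - int k + int N - 1) = \<delta> + hk + N - Suc k" using k by linarith
  have e2: "nat (int (\<gamma>+\<delta>) - (int \<delta> + int hk - int k)) = \<gamma> + k - hk" using hk by linarith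
  have e3: "nat (int \<delta> - int k - int \<delta> + int N - 1) = N - Suc k" using k by linarith
  have e4: "nat (int \<gamma> - (int \<delta> - int k - int \<delta>)) = \<gamma> + k" by linarith
  have e5: "nat (int \<delta> - int k + int N - 1) = \<delta> + N - Suc k" using k by linarith
  have e6: "nat (int (\<gamma>+\<delta>) - (int \<delta> - int k)) = \<gamma> + k" by linarith
  have e7: "nat (int \<delta> + int hk - int k - int \<delta> + int N - 1) = hk + N - Suc k" using k by linarith
  have e8: "nat (int \<gamma> - (int \<delta> + int hk - int k - int \<delta>)) = \<gamma> + k - hk" using hk by linarith
  show ?thesis unfolding wfc_def e1 e2 e3 e4 e5 e6 e7 e8
    by (rule ratio_alg) simp_all
qed



lemma G_ratio:
  assumes "M \<le> N"
  shows "barnesG (N - M + 1) / barnesG (N + 1) * (barnesG (\<delta> + N + 1) / barnesG (\<delta> + N - M + 1)) =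
    (\<Prod>k<M. fact (\<delta> + N - Suc k) / fact (N - Suc k))"
proof -
  have g1: "barnesG (Suc N) = barnesG (Suc (N - M)) * (\<Prod>k<M. fact (N - Suc k))"
  proof -
    have "barnesG (Suc (N - M + M)) = barnesG (Suc (N - M)) * (\<Prod>i<M. fact (N - M + i))"
      by (rule barnesG_prod)
    also have "(\<Prod>i<M. fact (N - M + i)) = (\<Prod>k<M. (fact (N - M + (M - Suc k)) :: real))"
      by (rule prod.nat_diff_reindex[symmetric])
    also have "\<dots> = (\<Prod>k<M. fact (N - Suc k))"
      by (rule prod.cong) (use assms in auto)
    finally have "barnesG (Suc (N - M + M)) = barnesG (Suc (N - M)) * (\<Prod>k<M. fact (N - Suc k))" .
    moreover have "N - M + M = N" using assms by simp
    ultimately show ?thesis by simp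
  qed
  have g2: "barnesG (Suc (\<delta> + N)) = barnesG (Suc (\<delta> + N - M)) * (\<Prod>k<M. fact (\<delta> + N - Suc k))"
  proof -
    have "barnesG (Suc (\<delta> + N - M + M)) = barnesG (Suc (\<delta> + N - M)) * (\<Prod>i<M. fact (\<delta> + N - M + i))"
      by (rule barnesG_prod)
    also have "(\<Prod>i<M. fact (\<delta> + N - M + i)) = (\<Prod>k<M. (fact (\<delta> + N - M + (M - Suc k)) :: real))"
      by (rule prod.nat_diff_reindex[symmetric])
    also have "\<dots> = (\<Prod>k<M. fact (\<delta> + N - Suc k))"
      by (rule prod.cong) (use assms in auto)
    finally have "barnesG (Suc (\<delta> + N - M + M)) = barnesG (Suc (\<delta> + N - M)) * (\<Prod>k<M. fact (\<delta> + N - Suc k))" .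
    moreover have "\<delta> + N - M + M = \<delta> + N" using assms by simp
    ultimately show ?thesis by simp
  qed
  have p1: "barnesG (Suc (N - M)) > 0" "barnesG (Suc (\<delta> + N - M)) > 0" by (rule barnesG_pos)+
  have p2: "(\<Prod>k<M. (fact (N - Suc k) :: real)) > 0" by (rule prod_pos) auto
  have e: "N - M + 1 = Suc (N - M)" "N + 1 = Suc N" "\<delta> + N + 1 = Suc (\<delta> + N)" "\<delta> + N - M + 1 = Suc (\<delta> + N - M)"
    using assms by simp_all
  show ?thesis unfolding prod_dividef e g1 g2
    using p1 p2 by (simp add: divide_simps)
qed


theorem mainTheorem7:
  fixes \<gamma> \<delta> N :: nat and \<mu> :: "nat list"
  assumes "0 < \<gamma>" and "0 < \<delta>" and "is_partition \<mu>" and "length \<mu> \<le> N"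
  shows "toeplitz_det_mu (phi_coeff \<gamma> \<delta>) \<mu> N =
    toeplitz_det (phi_coeff \<gamma> \<delta>) N
    * (barnesG (N - length \<mu> + 1) / barnesG (N + 1))
    * (barnesG (\<delta> + N + 1) / barnesG (\<delta> + N - length \<mu> + 1))
    * schur_eval (conj_part \<mu>) \<gamma> (\<lambda>_. 1)
    * (\<Prod>k = 1..length \<mu>. fact (part_nth \<mu> k + N - k) / fact (\<delta> + part_nth \<mu> k + N - k))"
proof -
  define M where "M = length \<mu>"
  define h where "h = hmu \<mu>"
  define x where "x k = int \<delta> + int (h k) - int k" for k
  define x0 where "x0 k = int \<delta> - int k" for k
  have MN: "M \<le> N" using assms(4) by (simp add: M_def)
  have dh: "decr N h" using decr_hmu[OF assms(3)] by (simp add: h_def)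
  have hpn: "part_nth \<mu> (Suc k) = h k" for k by (simp add: h_def hmu_def)
  have hz: "h k = 0" if "M \<le> k" for k using that by (simp add: h_def hmu_alt M_def)
  define L where "L = toeplitz_det_mu (phi_coeff \<gamma> \<delta>) \<mu> N"
  define D where "D = toeplitz_det (phi_coeff \<gamma> \<delta>) N"
  define S where "S = schur_eval (conj_part \<mu>) \<gamma> (\<lambda>_. 1)"
  have L: "L = det (mat N N (\<lambda>(j,k). gbin (\<gamma>+\<delta>) (x k - 0 + int j)))"
    unfolding L_def toeplitz_det_mu_def
    by (intro arg_cong[where f=det] cong_mat) (auto simp: phi_gbin x_def hpn[symmetric] algebra_simps)
  have D: "D = det (mat N N (\<lambda>(j,k). gbin (\<gamma>+\<delta>) (x0 k - 0 + int j)))"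
    unfolding D_def toeplitz_det_def
    by (intro arg_cong[where f=det] cong_mat) (auto simp: phi_gbin x0_def algebra_simps)
  have S: "S = det (mat N N (\<lambda>(j,k). gbin \<gamma> (x k - int \<delta> + int j)))"
  proof -
    have "S = real (card (SSYTc (CS N h) \<gamma>))"
      unfolding S_def schur_card SSYT_c cells_conj[OF assms(3,4)] h_def ..
    also have "\<dots> = SD N \<gamma> h" by (rule card_SD[OF dh])
    finally show ?thesis unfolding SD_def x_def by (simp add: algebra_simps)
  qed
  have one: "1 = det (mat N N (\<lambda>(j,k). gbin \<gamma> (x0 k - int \<delta> + int j)))"
  proof -
    have "CS N (\<lambda>_. 0) = {}" by (simp add: CS_def)
    then have "real (card (SSYTc (CS N (\<lambda>_. 0)) \<gamma>)) = 1" by (simp add: SSYTc_empty)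
    moreover have "real (card (SSYTc (CS N (\<lambda>_. 0)) \<gamma>)) = SD N \<gamma> (\<lambda>_. 0)"
      by (rule card_SD) (simp add: decr_def)
    ultimately show ?thesis unfolding SD_def x0_def by (simp add: algebra_simps)
  qed
  define P :: real where "P = (\<Prod>k = 1..length \<mu>. fact (part_nth \<mu> k + N - k) / fact (\<delta> + part_nth \<mu> k + N - k))"
  define G where "G = barnesG (N - length \<mu> + 1) / barnesG (N + 1) * (barnesG (\<delta> + N + 1) / barnesG (\<delta> + N - length \<mu> + 1))"
  have goal: "L = D * G * S * P"
  proof (cases "\<exists>k<N. \<gamma> + k < h k")
    case True
    then obtain k where k: "k < N" "\<gamma> + k < h k" by auto
    have "L = 0" unfolding L
      by (rule det_zero_col[OF k(1)]) (use k in \<open>auto simp: gbin_def x_def\<close>)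
    moreover have "S = 0" unfolding S
      by (rule det_zero_col[OF k(1)]) (use k in \<open>auto simp: gbin_def x_def\<close>)
    ultimately show ?thesis by simp
  next
    case False
    have nd: "h k \<le> \<gamma> + k" if "k < N" for k
    proof -
      have "\<not> (\<gamma> + k < h k)" using False that by blast
      then show ?thesis by simp
    qed
    obtain K1 where K1: "\<forall>y::nat\<Rightarrow>int. (\<forall>k<N. 0 \<le> y k - 0 + int N - 1 \<and> y k - 0 \<le> int (\<gamma>+\<delta>)) \<longrightarrow>
      det (mat N N (\<lambda>(j,k). gbin (\<gamma>+\<delta>) (y k - 0 + int j))) = K1 * Vdet N y * (\<Prod>k<N. wfc (\<gamma>+\<delta>) N (y k - 0))"
      using eval_det[where n="\<gamma>+\<delta>" and N=N and s=0] by blast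
    obtain K2 where K2: "\<forall>y::nat\<Rightarrow>int. (\<forall>k<N. 0 \<le> y k - int \<delta> + int N - 1 \<and> y k - int \<delta> \<le> int \<gamma>) \<longrightarrow>
      det (mat N N (\<lambda>(j,k). gbin \<gamma> (y k - int \<delta> + int j))) = K2 * Vdet N y * (\<Prod>k<N. wfc \<gamma> N (y k - int \<delta>))"
      using eval_det[where n="\<gamma>" and N=N and s="int \<delta>"] by blast
    define W1x where "W1x = (\<Prod>k<N. wfc (\<gamma>+\<delta>) N (x k - 0))"
    define W1x0 where "W1x0 = (\<Prod>k<N. wfc (\<gamma>+\<delta>) N (x0 k - 0))"
    define W2x where "W2x = (\<Prod>k<N. wfc \<gamma> N (x k - int \<delta>))"
    define W2x0 where "W2x0 = (\<Prod>k<N. wfc \<gamma> N (x0 k - int \<delta>))"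
    have nd': "int (h k) - int k \<le> int \<gamma>" if "k < N" for k using nd[OF that] by linarith
    have eL: "L = K1 * Vdet N x * W1x" unfolding L W1x_def
      by (rule K1[rule_format]) (use nd' in \<open>auto simp: x_def\<close>)
    have eD: "D = K1 * Vdet N x0 * W1x0" unfolding D W1x0_def
      by (rule K1[rule_format]) (auto simp: x0_def)
    have eS: "S = K2 * Vdet N x * W2x" unfolding S W2x_def
      by (rule K2[rule_format]) (use nd' in \<open>auto simp: x_def\<close>)
    have e1: "1 = K2 * Vdet N x0 * W2x0" unfolding one W2x0_def
      by (rule K2[rule_format]) (auto simp: x0_def)
    define R :: "nat \<Rightarrow> real" where "R k = fact (h k + N - Suc k) / fact (\<delta> + h k + N - Suc k) * (fact (\<delta> + N - Suc k) / fact (N - Suc k))" for k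
    have ratio: "W1x * W2x0 = W1x0 * W2x * (\<Prod>k<N. R k)"
    proof -
      have "W1x * W2x0 = (\<Prod>k<N. wfc (\<gamma>+\<delta>) N (x k - 0) * wfc \<gamma> N (x0 k - int \<delta>))"
        unfolding W1x_def W2x0_def by (simp add: prod.distrib)
      also have "\<dots> = (\<Prod>k<N. wfc (\<gamma>+\<delta>) N (x0 k - 0) * wfc \<gamma> N (x k - int \<delta>) * R k)"
      proof (rule prod.cong[OF refl])
        fix k assume "k \<in> {..<N}"
        then have k: "k < N" by simp
        show "wfc (\<gamma>+\<delta>) N (x k - 0) * wfc \<gamma> N (x0 k - int \<delta>) = wfc (\<gamma>+\<delta>) N (x0 k - 0) * wfc \<gamma> N (x k - int \<delta>) * R k"
          using wfc_ratio[OF k nd[OF k], where \<delta>=\<delta>] unfolding x_def x0_def R_def by simp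
      qed
      also have "\<dots> = W1x0 * W2x * (\<Prod>k<N. R k)"
        unfolding W1x0_def W2x_def by (simp add: prod.distrib)
      finally show ?thesis .
    qed
    have key: "L * (W1x0 * W2x) = D * S * (W1x * W2x0)"
    proof -
      have "D * S * (W1x * W2x0) = (K2 * Vdet N x0 * W2x0) * (L * (W1x0 * W2x))"
        unfolding eL eD eS by (simp add: ac_simps)
      then show ?thesis using e1 by simp
    qed
    have nz: "W1x0 * W2x \<noteq> 0"
      unfolding W1x0_def W2x_def using wfc_pos by (simp add: prod_pos less_imp_neq[symmetric])
    have LR: "L = D * S * (\<Prod>k<N. R k)"
      using key nz unfolding ratio by (simp add: field_simps)
    have R1: "R k = 1" if "M \<le> k" for k
      using hz[OF that] by (simp add: R_def)
    have "(\<Prod>k<N. R k) = (\<Prod>k<M. R k)"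
    proof -
      have "(\<Prod>k<N. R k) = (\<Prod>k<M. R k) * (\<Prod>k\<in>{M..<N}. R k)"
        using prod.atLeastLessThan_concat[of 0 M N R] MN by (simp add: atLeast0LessThan)
      also have "(\<Prod>k\<in>{M..<N}. R k) = 1" using R1 by simp
      finally show ?thesis by simp
    qed
    also have "\<dots> = (\<Prod>k<M. fact (h k + N - Suc k) / fact (\<delta> + h k + N - Suc k)) * (\<Prod>k<M. fact (\<delta> + N - Suc k) / fact (N - Suc k))"
      unfolding R_def by (rule prod.distrib)
    also have "(\<Prod>k<M. fact (h k + N - Suc k) / fact (\<delta> + h k + N - Suc k)) = P"
    proof -
      have "P = (\<Prod>k<M. fact (part_nth \<mu> (Suc k) + N - Suc k) / fact (\<delta> + part_nth \<mu> (Suc k) + N - Suc k))"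
        unfolding P_def M_def[symmetric] One_nat_def by (rule prod.atLeast1_atMost_eq)
      then show ?thesis by (simp add: hpn)
    qed
    also have "(\<Prod>k<M. fact (\<delta> + N - Suc k) / fact (N - Suc k) :: real) = G"
      unfolding G_def M_def[symmetric] by (rule G_ratio[OF MN, symmetric])
    finally have "(\<Prod>k<N. R k) = P * G" .
    then show ?thesis using LR by (simp add: ac_simps)
  qed
  then show ?thesis unfolding L_def D_def S_def P_def G_def by (simp add: ac_simps)
qed


end
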